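(* Let $\Gamma>0$ be an ordinal, $\mathcal{M}=(W,R,V)$ a Kripke model, $w_0\in W$, and $\varphi_0$ a sentence of the modal $\mu$-calculus in normal form. Then $\mathcal{M},w_0\vDash^\Gamma\varphi_0$ if and only if $\mathcal{M},w_0\Vdash^\Gamma\varphi_0$, i.e. $\varphi_0$ is true at $w_0$ under $\Gamma$-bounded compositional semantics iff Eloise has a winning strategy in the $\Gamma$-bounded evaluation game $(\mathcal{M},w_0,\varphi_0,\Gamma)$.
   Context: Formulae of the modal $\mu$-calculus over proposition symbols $\Phi$ and label symbols $\Lambda$: $\varphi ::= p \mid \neg p \mid X \mid \varphi\vee\varphi \mid \varphi\wedge\varphi \mid \Diamond\varphi \mid \Box\varphi \mid \mu X\varphi \mid \nu X\varphi$. $\mathrm{Sub}(\varphi)$ is the set of occurrences (nodes of the syntax tree); $\mathrm{Sub}_{\mu\nu}(\varphi)$ those of form $\mu X\psi$ or $\nu X\psi$. A sentence has no free label occurrences. Normal form: each label symbol occurs at most once in a $\mu$- or $\nu$-operator. For an atomic occurrence $X$ in a sentence $\varphi_0$, $\mathrm{rf}(X)$ is the nearest ancestor occurrence of the form $\mu X\psi$ or $\nu X\psi$. $\Gamma$-bounded compositional semantics ($\mathcal{M}=(W,R,V)$, assignment $s:\Lambda\to\mathcal{P}(W)$): $\mathcal{M},w\vDash^\Gamma_s p$ iff $w\in V(p)$; $\neg p$ iff $w\notin V(p)$; $X$ iff $w\in s(X)$; $\vee,\wedge$ as usual; $\Diamond\psi$ iff some $v$ with $wRv$ satisfies $\psi$;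 $\Box\psi$ iff all $v$ with $wRv$ satisfy $\psi$; $\mathcal{M},w\vDash^\Gamma_s\mu X\psi$ iff $w\in F^\Gamma_\mu$ and $\mathcal{M},w\vDash^\Gamma_s\nu X\psi$ iff $w\in F^\Gamma_\nu$, where $F(A)=\{v\in W\mid\mathcal{M},v\vDash^\Gamma_{s[A/X]}\psi\}$ ($s[A/X]$ agrees with $s$ except $X\mapsto A$), and for $F:\mathcal{P}(W)\to\mathcal{P}(W)$: $F^0_\mu=\emptyset$, $F^{\beta+1}_\mu=F(F^\beta_\mu)$, $F^\lambda_\mu=\bigcup_{\delta<\lambda}F^\delta_\mu$ ($\lambda$ limit); $F^0_\nu=W$, $F^{\beta+1}_\nu=F(F^\beta_\nu)$, $F^\lambda_\nu=\bigcap_{\delta<\lambda}F^\delta_\nu$ ($\lambda$ limit). For a sentence truth does not depend on $s$, written $\mathcal{M},w\vDash^\Gamma\varphi$. The $\Gamma$-bounded evaluation game $(\mathcal{M},w_0,\varphi_0,\Gamma)$: players Eloise and Abelard; positions $(w,\varphi,c)$ with $w\in W$, $\varphi\in\mathrm{Sub}(\varphi_0)$, $c:\mathrm{Sub}_{\mu\nu}(\varphi_0)\to\{\gamma\mid\gamma\le\Gamma\}$; initial position $(w_0,\varphi_0,c_0)$ with $c_0\equiv\Gamma$. Rules: at $(w,p,c)$ Eloise wins iff $w\in V(p)$, else Abelard wins; at $(w,\neg p,c)$ Eloise wins iff $w\notin V(p)$, else Abelard; at $(w,\psi\vee\theta,c)$ Eloise picks $(w,\psi,c)$ or $(w,\theta,c)$;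 at $(w,\psi\wedge\theta,c)$ Abelard picks; at $(w,\Diamond\psi,c)$ Eloise picks $v$ with $wRv$, next $(v,\psi,c)$, and Abelard wins if there is none; at $(w,\Box\psi,c)$ Abelard picks $v$ with $wRv$, next $(v,\psi,c)$, and Eloise wins if there is none; at $(w,\mu X\psi,c)$ Eloise picks $\gamma<\Gamma$, next $(w,\psi,c[\gamma/\mu X\psi])$; at $(w,\nu X\psi,c)$ Abelard picks $\gamma<\Gamma$, next $(w,\psi,c[\gamma/\nu X\psi])$. At $(w,X,c)$ with $\gamma=c(\mathrm{rf}(X))$: if $\mathrm{rf}(X)=\mu X\psi$, then Abelard wins if $\gamma=0$, otherwise Eloise picks $\gamma'<\gamma$ and play moves to $(w,\psi,c')$ with $c'(\mu X\psi)=\gamma'$, $c'(\theta)=\Gamma$ for all $\theta\in\mathrm{Sub}_{\mu\nu}(\varphi_0)$ occurring inside $\psi$, and $c'(\theta)=c(\theta)$ otherwise; if $\mathrm{rf}(X)=\nu X\psi$, symmetrically Eloise wins if $\gamma=0$, otherwise Abelard picks $\gamma'<\gamma$ with the same clock update. A strategy for Eloise is a partial function on positions giving her choice at each position where she must move; it is winning if she can always follow it and wins every play in which she follows it. $\mathcal{M},w_0\Vdash^\Gamma\varphi_0$ iff Eloise has a winning strategy in $(\mathcal{M},w_0,\varphi_0,\Gamma)$. *)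

theory Defs
  imports Main "HOL-Library.Sublist"
begin

datatype ('p, 'l) fml =
    Prop 'p | NProp 'p | Var 'l
  | Or "('p, 'l) fml" "('p, 'l) fml" | And "('p, 'l) fml" "('p, 'l) fml"
  | Dia "('p, 'l) fml" | Box "('p, 'l) fml"
  | Mu 'l "('p, 'l) fml" | Nu 'l "('p, 'l) fml"

text \<open>Occurrences (nodes of the syntax tree) are addressed by positions (paths):
  child 0 / 1 of a binary connective, child 0 of a unary one.\<close>

fun subf :: "('p, 'l) fml \<Rightarrow> nat list \<Rightarrow> ('p, 'l) fml option" where
  "subf f [] = Some f"
| "subf (Or a b) (0 # p) = subf a p"
| "subf (Or a b) (Suc 0 # p) = subf b p"
| "subf (And a b) (0 # p) = subf a p"
| "subf (And a b) (Suc 0 # p) = subf b p"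
| "subf (Dia a) (0 # p) = subf a p"
| "subf (Box a) (0 # p) = subf a p"
| "subf (Mu X a) (0 # p) = subf a p"
| "subf (Nu X a) (0 # p) = subf a p"
| "subf _ _ = None"

definition Sub :: "('p, 'l) fml \<Rightarrow> nat list set" where
  "Sub f0 = {p. subf f0 p \<noteq> None}"

definition binds :: "('p, 'l) fml \<Rightarrow> 'l \<Rightarrow> nat list \<Rightarrow> bool" where
  "binds f0 X q \<longleftrightarrow> (\<exists>a. subf f0 q = Some (Mu X a) \<or> subf f0 q = Some (Nu X a))"

definition Sub_munu :: "('p, 'l) fml \<Rightarrow> nat list set" where
  "Sub_munu f0 = {q. \<exists>X. binds f0 X q}"

definition sentence :: "('p, 'l) fml \<Rightarrow> bool" where
  "sentence f0 \<longleftrightarrow>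
     (\<forall>p X. subf f0 p = Some (Var X) \<longrightarrow> (\<exists>q. strict_prefix q p \<and> binds f0 X q))"

definition normal_form :: "('p, 'l) fml \<Rightarrow> bool" where
  "normal_form f0 \<longleftrightarrow> (\<forall>X q1 q2. binds f0 X q1 \<and> binds f0 X q2 \<longrightarrow> q1 = q2)"

definition rf :: "('p, 'l) fml \<Rightarrow> nat list \<Rightarrow> 'l \<Rightarrow> nat list" where
  "rf f0 p X = (THE q. strict_prefix q p \<and> binds f0 X q \<and>
       (\<forall>q'. strict_prefix q' p \<and> binds f0 X q' \<longrightarrow> prefix q' q))"

definition ord_iter ::
  "'a set \<Rightarrow> ('a set \<Rightarrow> 'a set) \<Rightarrow> ('a set set \<Rightarrow> 'a set) \<Rightarrow> 'o::wellorder \<Rightarrow> 'a set" where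
  "ord_iter b F L = wfrec {(x, y). x < y}
     (\<lambda>rec \<gamma>. if (\<forall>\<delta>. \<not> \<delta> < \<gamma>) then b
             else if (\<exists>\<beta>. \<beta> < \<gamma> \<and> (\<forall>\<delta>. \<delta> < \<gamma> \<longrightarrow> \<delta> \<le> \<beta>))
             then F (rec (THE \<beta>. \<beta> < \<gamma> \<and> (\<forall>\<delta>. \<delta> < \<gamma> \<longrightarrow> \<delta> \<le> \<beta>)))
             else L (rec ` {\<delta>. \<delta> < \<gamma>}))"

definition iter_mu :: "('a set \<Rightarrow> 'a set) \<Rightarrow> 'o::wellorder \<Rightarrow> 'a set" where
  "iter_mu F = ord_iter {} F Union"

definition iter_nu :: "'a set \<Rightarrow> ('a set \<Rightarrow> 'a set) \<Rightarrow> 'o::wellorder \<Rightarrow> 'a set" where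
  "iter_nu W F = ord_iter W F Inter"

text \<open>Kripke model (W, R, V); den ... s f is the set of worlds w in W with M, w |=^Gamma_s f.\<close>
primrec den :: "'w set \<Rightarrow> ('w \<times> 'w) set \<Rightarrow> ('p \<Rightarrow> 'w set) \<Rightarrow> 'o::wellorder
                \<Rightarrow> ('l \<Rightarrow> 'w set) \<Rightarrow> ('p, 'l) fml \<Rightarrow> 'w set" where
  "den W R V \<Gamma> s (Prop p) = {w \<in> W. w \<in> V p}"
| "den W R V \<Gamma> s (NProp p) = {w \<in> W. w \<notin> V p}"
| "den W R V \<Gamma> s (Var X) = {w \<in> W. w \<in> s X}"
| "den W R V \<Gamma> s (Or a b) = den W R V \<Gamma> s a \<union> den W R V \<Gamma> s b"
| "den W R V \<Gamma> s (And a b) = den W R V \<Gamma> s a \<inter> den W R V \<Gamma> s b"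
| "den W R V \<Gamma> s (Dia a) = {w \<in> W. \<exists>v. (w, v) \<in> R \<and> v \<in> den W R V \<Gamma> s a}"
| "den W R V \<Gamma> s (Box a) = {w \<in> W. \<forall>v. (w, v) \<in> R \<longrightarrow> v \<in> den W R V \<Gamma> s a}"
| "den W R V \<Gamma> s (Mu X a) = iter_mu (\<lambda>A. den W R V \<Gamma> (s(X := A)) a) \<Gamma>"
| "den W R V \<Gamma> s (Nu X a) = iter_nu W (\<lambda>A. den W R V \<Gamma> (s(X := A)) a) \<Gamma>"

text \<open>Truth of a sentence (independent of the assignment; we use the empty one).\<close>
definition sat :: "'w set \<Rightarrow> ('w \<times> 'w) set \<Rightarrow> ('p \<Rightarrow> 'w set) \<Rightarrow> 'o::wellorder
                   \<Rightarrow> 'w \<Rightarrow> ('p, 'l) fml \<Rightarrow> bool" where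
  "sat W R V \<Gamma> w f0 \<longleftrightarrow> w \<in> den W R V \<Gamma> (\<lambda>_. {}) f0"

datatype player = Eloise | Abelard

datatype 'pos gnode = Win player | Turn player "'pos set"

type_synonym ('w, 'o) gpos = "'w \<times> nat list \<times> (nat list \<Rightarrow> 'o)"

text \<open>Clock update when moving from a variable back to the body of its binder at q.\<close>
definition reset :: "('p, 'l) fml \<Rightarrow> 'o \<Rightarrow> nat list \<Rightarrow> 'o \<Rightarrow> (nat list \<Rightarrow> 'o) \<Rightarrow> (nat list \<Rightarrow> 'o)" where
  "reset f0 \<Gamma> q \<gamma>' c = (\<lambda>\<theta>. if \<theta> = q then \<gamma>'
       else if \<theta> \<in> Sub_munu f0 \<and> prefix (q @ [0]) \<theta> then \<Gamma> else c \<theta>)"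

definition gnode :: "'w set \<Rightarrow> ('w \<times> 'w) set \<Rightarrow> ('p \<Rightarrow> 'w set) \<Rightarrow> 'o::wellorder
                     \<Rightarrow> ('p, 'l) fml \<Rightarrow> ('w, 'o) gpos \<Rightarrow> ('w, 'o) gpos gnode" where
  "gnode W R V \<Gamma> f0 x = (case x of (w, p, c) \<Rightarrow>
     (case subf f0 p of
        None \<Rightarrow> Win Abelard
      | Some (Prop q) \<Rightarrow> Win (if w \<in> V q then Eloise else Abelard)
      | Some (NProp q) \<Rightarrow> Win (if w \<notin> V q then Eloise else Abelard)
      | Some (Or a b) \<Rightarrow> Turn Eloise {(w, p @ [0], c), (w, p @ [1], c)}
      | Some (And a b) \<Rightarrow> Turn Abelard {(w, p @ [0], c), (w, p @ [1], c)}
      | Some (Dia a) \<Rightarrow> (if \<not> (\<exists>v. (w, v) \<in> R) then Win Abelard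
                         else Turn Eloise {(v, p @ [0], c) | v. (w, v) \<in> R})
      | Some (Box a) \<Rightarrow> (if \<not> (\<exists>v. (w, v) \<in> R) then Win Eloise
                         else Turn Abelard {(v, p @ [0], c) | v. (w, v) \<in> R})
      | Some (Mu X a) \<Rightarrow> Turn Eloise {(w, p @ [0], c(p := \<gamma>)) | \<gamma>. \<gamma> < \<Gamma>}
      | Some (Nu X a) \<Rightarrow> Turn Abelard {(w, p @ [0], c(p := \<gamma>)) | \<gamma>. \<gamma> < \<Gamma>}
      | Some (Var X) \<Rightarrow>
          (let q = rf f0 p X; \<gamma> = c q in
           (case subf f0 q of
              Some (Mu Y b) \<Rightarrow> (if \<not> (\<exists>\<delta>. \<delta> < \<gamma>) then Win Abelard
                  else Turn Eloise {(w, q @ [0], reset f0 \<Gamma> q \<gamma>' c) | \<gamma>'. \<gamma>' < \<gamma>})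
            | Some (Nu Y b) \<Rightarrow> (if \<not> (\<exists>\<delta>. \<delta> < \<gamma>) then Win Eloise
                  else Turn Abelard {(w, q @ [0], reset f0 \<Gamma> q \<gamma>' c) | \<gamma>'. \<gamma>' < \<gamma>})
            | _ \<Rightarrow> Win Abelard))))"

definition cmove :: "('w, 'o) gpos gnode \<Rightarrow> (('w, 'o) gpos \<Rightarrow> ('w, 'o) gpos option)
                     \<Rightarrow> ('w, 'o) gpos \<Rightarrow> ('w, 'o) gpos \<Rightarrow> bool" where
  "cmove nd \<sigma> x y \<longleftrightarrow> (case nd of
      Turn Eloise S \<Rightarrow> \<sigma> x = Some y \<and> y \<in> S
    | Turn Abelard S \<Rightarrow> y \<in> S
    | Win _ \<Rightarrow> False)"

definition init_pos :: "'o \<Rightarrow> 'w \<Rightarrow> ('w, 'o) gpos" where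
  "init_pos \<Gamma> w0 = (w0, [], \<lambda>_. \<Gamma>)"

definition winning_strategy :: "'w set \<Rightarrow> ('w \<times> 'w) set \<Rightarrow> ('p \<Rightarrow> 'w set) \<Rightarrow> 'o::wellorder
      \<Rightarrow> 'w \<Rightarrow> ('p, 'l) fml \<Rightarrow> (('w, 'o) gpos \<Rightarrow> ('w, 'o) gpos option) \<Rightarrow> bool" where
  "winning_strategy W R V \<Gamma> w0 f0 \<sigma> \<longleftrightarrow>
     (let step = (\<lambda>x y. cmove (gnode W R V \<Gamma> f0 x) \<sigma> x y) in
      (\<forall>x. step\<^sup>*\<^sup>* (init_pos \<Gamma> w0) x \<longrightarrow>
          (case gnode W R V \<Gamma> f0 x of
             Turn Eloise S \<Rightarrow> (\<exists>y. \<sigma> x = Some y \<and> y \<in> S)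
           | Turn Abelard S \<Rightarrow> True
           | Win pl \<Rightarrow> pl = Eloise))
      \<and> \<not> (\<exists>f. f 0 = init_pos \<Gamma> w0 \<and> (\<forall>n. step (f n) (f (Suc n)))))"

definition eloise_wins :: "'w set \<Rightarrow> ('w \<times> 'w) set \<Rightarrow> ('p \<Rightarrow> 'w set) \<Rightarrow> 'o::wellorder
      \<Rightarrow> 'w \<Rightarrow> ('p, 'l) fml \<Rightarrow> bool" where
  "eloise_wins W R V \<Gamma> w0 f0 \<longleftrightarrow> (\<exists>\<sigma>. winning_strategy W R V \<Gamma> w0 f0 \<sigma>)"

end

theory Submission
  imports Defs
begin


lemma ord_iter_eq:
  "ord_iter b F L (\<gamma>::'o::wellorder) = (if (\<forall>\<delta>. \<not> \<delta> < \<gamma>) then b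
     else if (\<exists>\<beta>. \<beta> < \<gamma> \<and> (\<forall>\<delta>. \<delta> < \<gamma> \<longrightarrow> \<delta> \<le> \<beta>))
     then F (ord_iter b F L (THE \<beta>. \<beta> < \<gamma> \<and> (\<forall>\<delta>. \<delta> < \<gamma> \<longrightarrow> \<delta> \<le> \<beta>)))
     else L (ord_iter b F L ` {\<delta>. \<delta> < \<gamma>}))"
proof -
  let ?P = "\<lambda>\<beta>. \<beta> < \<gamma> \<and> (\<forall>\<delta>. \<delta> < \<gamma> \<longrightarrow> \<delta> \<le> \<beta>)"
  have th: "?P (THE \<beta>. ?P \<beta>)" if "\<exists>\<beta>. ?P \<beta>"
  proof -
    from that obtain \<beta> where b: "?P \<beta>" by blast
    show ?thesis by (rule theI[of ?P \<beta>]) (use b in \<open>auto intro: order.antisym\<close>)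
  qed
  show ?thesis
    unfolding ord_iter_def
    apply (subst wfrec[OF wf])
    using th by (auto simp: cut_apply intro!: arg_cong[where f=L] image_cong)
qed



lemma the_pred:
  assumes "\<exists>\<beta>. \<beta> < (\<gamma>::'o::wellorder) \<and> (\<forall>\<delta>. \<delta> < \<gamma> \<longrightarrow> \<delta> \<le> \<beta>)"
  shows "(THE \<beta>. \<beta> < \<gamma> \<and> (\<forall>\<delta>. \<delta> < \<gamma> \<longrightarrow> \<delta> \<le> \<beta>)) < \<gamma> \<and>
         (\<forall>\<delta>. \<delta> < \<gamma> \<longrightarrow> \<delta> \<le> (THE \<beta>. \<beta> < \<gamma> \<and> (\<forall>\<delta>. \<delta> < \<gamma> \<longrightarrow> \<delta> \<le> \<beta>)))"
proof -
  from assms obtain \<beta> where b: "\<beta> < \<gamma> \<and> (\<forall>\<delta>. \<delta> < \<gamma> \<longrightarrow> \<delta> \<le> \<beta>)" by blast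
  show ?thesis by (rule theI[of _ \<beta>]) (use b in \<open>auto intro: order.antisym\<close>)
qed

lemma mu_form:
  assumes mono: "\<And>A B. A \<subseteq> B \<Longrightarrow> F A \<subseteq> F B"
  shows "iter_mu F (\<Gamma>::'o::wellorder) = (\<Union>\<gamma>\<in>{\<gamma>. \<gamma> < \<Gamma>}. F (iter_mu F \<gamma>))"
proof (induction \<Gamma> rule: less_induct)
  case (less \<Gamma>)
  let ?I = "iter_mu F"
  have sub: "?I a \<subseteq> ?I b" if "a \<le> b" "b < \<Gamma>" for a b
  proof -
    have "a < \<Gamma>" using that by auto
    then show ?thesis unfolding less.IH[OF \<open>a < \<Gamma>\<close>] less.IH[OF \<open>b < \<Gamma>\<close>] using that by (auto intro: less_le_trans)
  qed
  show ?case
  proof (cases "\<forall>\<delta>. \<not> \<delta> < \<Gamma>")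
    case True
    then show ?thesis unfolding iter_mu_def by (subst ord_iter_eq) simp
  next
    case nb: False
    show ?thesis
    proof (cases "\<exists>\<beta>. \<beta> < \<Gamma> \<and> (\<forall>\<delta>. \<delta> < \<Gamma> \<longrightarrow> \<delta> \<le> \<beta>)")
      case True
      define \<beta> where "\<beta> = (THE \<beta>. \<beta> < \<Gamma> \<and> (\<forall>\<delta>. \<delta> < \<Gamma> \<longrightarrow> \<delta> \<le> \<beta>))"
      have b: "\<beta> < \<Gamma>" "\<forall>\<delta>. \<delta> < \<Gamma> \<longrightarrow> \<delta> \<le> \<beta>" using the_pred[OF True] unfolding \<beta>_def by auto
      have eq: "?I \<Gamma> = F (?I \<beta>)" unfolding iter_mu_def \<beta>_def
        by (subst ord_iter_eq[of _ _ _ \<Gamma>]) (simp only: if_not_P[OF nb] if_P[OF True])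
      have "(\<Union>\<gamma>\<in>{\<gamma>. \<gamma> < \<Gamma>}. F (?I \<gamma>)) = F (?I \<beta>)"
      proof
        show "(\<Union>\<gamma>\<in>{\<gamma>. \<gamma> < \<Gamma>}. F (?I \<gamma>)) \<subseteq> F (?I \<beta>)"
        proof
          fix x assume "x \<in> (\<Union>\<gamma>\<in>{\<gamma>. \<gamma> < \<Gamma>}. F (?I \<gamma>))"
          then obtain \<gamma> where g: "\<gamma> < \<Gamma>" "x \<in> F (?I \<gamma>)" by auto
          have "?I \<gamma> \<subseteq> ?I \<beta>" using sub[of \<gamma> \<beta>] b g by auto
          then show "x \<in> F (?I \<beta>)" using mono g(2) by blast
        qed
        show "F (?I \<beta>) \<subseteq> (\<Union>\<gamma>\<in>{\<gamma>. \<gamma> < \<Gamma>}. F (?I \<gamma>))" using b by auto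
      qed
      then show ?thesis using eq by simp
    next
      case nl: False
      have eq: "?I \<Gamma> = \<Union> (?I ` {\<delta>. \<delta> < \<Gamma>})" unfolding iter_mu_def
        by (subst ord_iter_eq[of _ _ _ \<Gamma>]) (simp only: if_not_P[OF nb] if_not_P[OF nl])
      have "\<Union> (?I ` {\<delta>. \<delta> < \<Gamma>}) = (\<Union>\<gamma>\<in>{\<gamma>. \<gamma> < \<Gamma>}. F (?I \<gamma>))"
      proof
        show "\<Union> (?I ` {\<delta>. \<delta> < \<Gamma>}) \<subseteq> (\<Union>\<gamma>\<in>{\<gamma>. \<gamma> < \<Gamma>}. F (?I \<gamma>))"
        proof
          fix x assume "x \<in> \<Union> (?I ` {\<delta>. \<delta> < \<Gamma>})"
          then obtain \<delta> where d: "\<delta> < \<Gamma>" "x \<in> ?I \<delta>" by auto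
          then obtain \<gamma> where "\<gamma> < \<delta>" "x \<in> F (?I \<gamma>)" using less.IH[OF d(1)] by auto
          then show "x \<in> (\<Union>\<gamma>\<in>{\<gamma>. \<gamma> < \<Gamma>}. F (?I \<gamma>))" using d by (auto intro: less_trans)
        qed
        show "(\<Union>\<gamma>\<in>{\<gamma>. \<gamma> < \<Gamma>}. F (?I \<gamma>)) \<subseteq> \<Union> (?I ` {\<delta>. \<delta> < \<Gamma>})"
        proof
          fix x assume "x \<in> (\<Union>\<gamma>\<in>{\<gamma>. \<gamma> < \<Gamma>}. F (?I \<gamma>))"
          then obtain \<gamma> where g: "\<gamma> < \<Gamma>" "x \<in> F (?I \<gamma>)" by auto
          then obtain \<delta> where d: "\<delta> < \<Gamma>" "\<gamma> < \<delta>" using nl by (meson not_le)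
          have "x \<in> ?I \<delta>" using less.IH[OF d(1)] d g by auto
          then show "x \<in> \<Union> (?I ` {\<delta>. \<delta> < \<Gamma>})" using d by auto
        qed
      qed
      then show ?thesis using eq by simp
    qed
  qed
qed

lemma nu_form:
  assumes mono: "\<And>A B. A \<subseteq> B \<Longrightarrow> F A \<subseteq> F B" and FW: "\<And>A. F A \<subseteq> W"
  shows "iter_nu W F (\<Gamma>::'o::wellorder) = W \<inter> (\<Inter>\<gamma>\<in>{\<gamma>. \<gamma> < \<Gamma>}. F (iter_nu W F \<gamma>))"
proof (induction \<Gamma> rule: less_induct)
  case (less \<Gamma>)
  let ?I = "iter_nu W F"
  have sub: "?I b \<subseteq> ?I a" if "a \<le> b" "b < \<Gamma>" for a b
  proof -
    have "a < \<Gamma>" using that by auto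
    then show ?thesis unfolding less.IH[OF \<open>a < \<Gamma>\<close>] less.IH[OF \<open>b < \<Gamma>\<close>] using that by (auto intro: less_le_trans)
  qed
  show ?case
  proof (cases "\<forall>\<delta>. \<not> \<delta> < \<Gamma>")
    case True
    then show ?thesis unfolding iter_nu_def by (subst ord_iter_eq) simp
  next
    case nb: False
    show ?thesis
    proof (cases "\<exists>\<beta>. \<beta> < \<Gamma> \<and> (\<forall>\<delta>. \<delta> < \<Gamma> \<longrightarrow> \<delta> \<le> \<beta>)")
      case True
      define \<beta> where "\<beta> = (THE \<beta>. \<beta> < \<Gamma> \<and> (\<forall>\<delta>. \<delta> < \<Gamma> \<longrightarrow> \<delta> \<le> \<beta>))"
      have b: "\<beta> < \<Gamma>" "\<forall>\<delta>. \<delta> < \<Gamma> \<longrightarrow> \<delta> \<le> \<beta>" using the_pred[OF True] unfolding \<beta>_def by auto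
      have eq: "?I \<Gamma> = F (?I \<beta>)" unfolding iter_nu_def \<beta>_def
        by (subst ord_iter_eq[of _ _ _ \<Gamma>]) (simp only: if_not_P[OF nb] if_P[OF True])
      have "W \<inter> (\<Inter>\<gamma>\<in>{\<gamma>. \<gamma> < \<Gamma>}. F (?I \<gamma>)) = F (?I \<beta>)"
      proof
        show "W \<inter> (\<Inter>\<gamma>\<in>{\<gamma>. \<gamma> < \<Gamma>}. F (?I \<gamma>)) \<subseteq> F (?I \<beta>)"
          using b by auto
        show "F (?I \<beta>) \<subseteq> W \<inter> (\<Inter>\<gamma>\<in>{\<gamma>. \<gamma> < \<Gamma>}. F (?I \<gamma>))"
        proof
          fix x assume x: "x \<in> F (?I \<beta>)"
          have "x \<in> F (?I \<gamma>)" if g: "\<gamma> < \<Gamma>" for \<gamma>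
          proof -
            have "?I \<beta> \<subseteq> ?I \<gamma>" using sub[of \<gamma> \<beta>] b g by auto
            then show ?thesis using mono x by blast
          qed
          then show "x \<in> W \<inter> (\<Inter>\<gamma>\<in>{\<gamma>. \<gamma> < \<Gamma>}. F (?I \<gamma>))" using FW x by auto
        qed
      qed
      then show ?thesis using eq by simp
    next
      case nl: False
      have eq: "?I \<Gamma> = \<Inter> (?I ` {\<delta>. \<delta> < \<Gamma>})" unfolding iter_nu_def
        by (subst ord_iter_eq[of _ _ _ \<Gamma>]) (simp only: if_not_P[OF nb] if_not_P[OF nl])
      have "\<Inter> (?I ` {\<delta>. \<delta> < \<Gamma>}) = W \<inter> (\<Inter>\<gamma>\<in>{\<gamma>. \<gamma> < \<Gamma>}. F (?I \<gamma>))"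
      proof
        show "W \<inter> (\<Inter>\<gamma>\<in>{\<gamma>. \<gamma> < \<Gamma>}. F (?I \<gamma>)) \<subseteq> \<Inter> (?I ` {\<delta>. \<delta> < \<Gamma>})"
        proof
          fix x assume x: "x \<in> W \<inter> (\<Inter>\<gamma>\<in>{\<gamma>. \<gamma> < \<Gamma>}. F (?I \<gamma>))"
          have "x \<in> ?I \<delta>" if d: "\<delta> < \<Gamma>" for \<delta>
            using x d less.IH[OF d] by auto
          then show "x \<in> \<Inter> (?I ` {\<delta>. \<delta> < \<Gamma>})" by auto
        qed
        show "\<Inter> (?I ` {\<delta>. \<delta> < \<Gamma>}) \<subseteq> W \<inter> (\<Inter>\<gamma>\<in>{\<gamma>. \<gamma> < \<Gamma>}. F (?I \<gamma>))"
        proof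
          fix x assume x: "x \<in> \<Inter> (?I ` {\<delta>. \<delta> < \<Gamma>})"
          obtain \<delta>0 where "\<delta>0 < \<Gamma>" using nb by auto
          then have "x \<in> W" using x less.IH[OF \<open>\<delta>0 < \<Gamma>\<close>] by auto
          moreover have "x \<in> F (?I \<gamma>)" if g: "\<gamma> < \<Gamma>" for \<gamma>
          proof -
            obtain \<delta> where d: "\<delta> < \<Gamma>" "\<gamma> < \<delta>" using nl g by (meson not_le)
            show ?thesis using x less.IH[OF d(1)] d by auto
          qed
          ultimately show "x \<in> W \<inter> (\<Inter>\<gamma>\<in>{\<gamma>. \<gamma> < \<Gamma>}. F (?I \<gamma>))" by auto
        qed
      qed
      then show ?thesis using eq by simp
    qed
  qed
qed



lemma ord_iter_inv:
  assumes "P b" "\<And>A. P (F A)" "\<And>S. S \<noteq> {} \<Longrightarrow> (\<forall>A\<in>S. P A) \<Longrightarrow> P (L S)"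
  shows "P (ord_iter b F L (\<gamma>::'o::wellorder))"
proof (induction \<gamma> rule: less_induct)
  case (less \<gamma>)
  have L: "P (L (ord_iter b F L ` {\<delta>. \<delta> < \<gamma>}))" if "\<exists>\<delta>. \<delta> < \<gamma>"
    using less.IH that by (intro assms(3)) auto
  show ?case
    by (subst ord_iter_eq) (use L assms(1,2) in auto)
qed

lemma iter_mu_mono:
  assumes mF: "\<And>A B. A \<subseteq> B \<Longrightarrow> F A \<subseteq> F B" and mG: "\<And>A B. A \<subseteq> B \<Longrightarrow> G A \<subseteq> G B"
    and FG: "\<And>A. F A \<subseteq> G A"
  shows "iter_mu F (\<gamma>::'o::wellorder) \<subseteq> iter_mu G \<gamma>"
proof (induction \<gamma> rule: less_induct)
  case (less \<gamma>)
  have "F (iter_mu F \<delta>) \<subseteq> G (iter_mu G \<delta>)" if "\<delta> < \<gamma>" for \<delta>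
    using FG[of "iter_mu F \<delta>"] mG[OF less.IH[OF that]] by blast
  then have "(\<Union>\<delta>\<in>{\<delta>. \<delta> < \<gamma>}. F (iter_mu F \<delta>)) \<subseteq> (\<Union>\<delta>\<in>{\<delta>. \<delta> < \<gamma>}. G (iter_mu G \<delta>))"
    by blast
  moreover have "iter_mu F \<gamma> = (\<Union>\<delta>\<in>{\<delta>. \<delta> < \<gamma>}. F (iter_mu F \<delta>))" by (rule mu_form[OF mF])
  moreover have "iter_mu G \<gamma> = (\<Union>\<delta>\<in>{\<delta>. \<delta> < \<gamma>}. G (iter_mu G \<delta>))" by (rule mu_form[OF mG])
  ultimately show ?case by (simp only:)
qed

lemma iter_nu_mono:
  assumes mF: "\<And>A B. A \<subseteq> B \<Longrightarrow> F A \<subseteq> F B" and mG: "\<And>A B. A \<subseteq> B \<Longrightarrow> G A \<subseteq> G B"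
    and FG: "\<And>A. F A \<subseteq> G A" and FW: "\<And>A. F A \<subseteq> W" and GW: "\<And>A. G A \<subseteq> W"
  shows "iter_nu W F (\<gamma>::'o::wellorder) \<subseteq> iter_nu W G \<gamma>"
proof (induction \<gamma> rule: less_induct)
  case (less \<gamma>)
  have "F (iter_nu W F \<delta>) \<subseteq> G (iter_nu W G \<delta>)" if "\<delta> < \<gamma>" for \<delta>
    using FG[of "iter_nu W F \<delta>"] mG[OF less.IH[OF that]] by blast
  then have "W \<inter> (\<Inter>\<delta>\<in>{\<delta>. \<delta> < \<gamma>}. F (iter_nu W F \<delta>)) \<subseteq> W \<inter> (\<Inter>\<delta>\<in>{\<delta>. \<delta> < \<gamma>}. G (iter_nu W G \<delta>))"
    by blast
  moreover have "iter_nu W F \<gamma> = W \<inter> (\<Inter>\<delta>\<in>{\<delta>. \<delta> < \<gamma>}. F (iter_nu W F \<delta>))" by (rule nu_form[OF mF FW])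
  moreover have "iter_nu W G \<gamma> = W \<inter> (\<Inter>\<delta>\<in>{\<delta>. \<delta> < \<gamma>}. G (iter_nu W G \<delta>))" by (rule nu_form[OF mG GW])
  ultimately show ?case by (simp only:)
qed

lemma den_W: "\<forall>p. V p \<subseteq> W \<Longrightarrow> den W R V \<Gamma> s f \<subseteq> W"
proof (induction f arbitrary: s)
  case (Mu X f)
  show ?case unfolding den.simps iter_mu_def
    by (rule ord_iter_inv[where P="\<lambda>A. A \<subseteq> W"]) (use Mu in blast)+
next
  case (Nu X f)
  show ?case unfolding den.simps iter_nu_def
    by (rule ord_iter_inv[where P="\<lambda>A. A \<subseteq> W"]) (use Nu in blast)+
qed auto

lemma den_mono: "\<forall>p. V p \<subseteq> W \<Longrightarrow> (\<forall>X. s X \<subseteq> s' X) \<Longrightarrow> den W R V \<Gamma> s f \<subseteq> den W R V \<Gamma> s' f"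
proof (induction f arbitrary: s s')
  case (Mu X f)
  have m: "\<forall>Y. (t(X := A)) Y \<subseteq> (t'(X := B)) Y" if "\<forall>Y. t Y \<subseteq> t' Y" "A \<subseteq> B" for t t' A B
    using that by auto
  show ?case unfolding den.simps
    apply (rule iter_mu_mono)
      apply (rule Mu.IH[OF Mu.prems(1)], rule m, blast, assumption)
     apply (rule Mu.IH[OF Mu.prems(1)], rule m, blast, assumption)
    apply (rule Mu.IH[OF Mu.prems(1)], rule m, rule Mu.prems(2), blast)
    done
next
  case (Nu X f)
  have m: "\<forall>Y. (t(X := A)) Y \<subseteq> (t'(X := B)) Y" if "\<forall>Y. t Y \<subseteq> t' Y" "A \<subseteq> B" for t t' A B
    using that by auto
  show ?case unfolding den.simps
    apply (rule iter_nu_mono)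
        apply (rule Nu.IH[OF Nu.prems(1)], rule m, blast, assumption)
       apply (rule Nu.IH[OF Nu.prems(1)], rule m, blast, assumption)
      apply (rule Nu.IH[OF Nu.prems(1)], rule m, rule Nu.prems(2), blast)
     apply (rule den_W[OF Nu.prems(1)])+
    done
next
  case (Dia f) 
  have "den W R V \<Gamma> s f \<subseteq> den W R V \<Gamma> s' f" using Dia by blast
  then show ?case by auto
next
  case (Box f)
  have "den W R V \<Gamma> s f \<subseteq> den W R V \<Gamma> s' f" using Box by blast
  then show ?case by auto
next
  case (Or f g)
  then show ?case by (simp, blast)
next
  case (And f g)
  then show ?case by (simp, blast)
qed auto



lemma subf_append: "subf f (p @ q) = (case subf f p of None \<Rightarrow> None | Some g \<Rightarrow> subf g q)"
  by (induction f p rule: subf.induct) auto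

lemma subf_len: "subf f p \<noteq> None \<Longrightarrow> length p \<le> size f"
  by (induction f p rule: subf.induct) auto

lemma subf_prefix: "subf f (p @ q) \<noteq> None \<Longrightarrow> subf f p \<noteq> None"
  by (simp add: subf_append split: option.splits)

locale G =
  fixes W :: "'w set" and R :: "('w \<times> 'w) set" and V :: "'p \<Rightarrow> 'w set"
    and \<Gamma> :: "'o::wellorder" and f0 :: "('p, 'l) fml"
  assumes RW: "R \<subseteq> W \<times> W" and VW: "\<forall>p. V p \<subseteq> W"
    and sent: "sentence f0" and nf: "normal_form f0"
begin

abbreviation FF where "FF E X a \<equiv> (\<lambda>A. den W R V \<Gamma> (E(X := A)) a)"

fun envat :: "('p, 'l) fml \<Rightarrow> nat list \<Rightarrow> nat list \<Rightarrow> (nat list \<Rightarrow> 'o) \<Rightarrow> ('l \<Rightarrow> 'w set) \<Rightarrow> ('l \<Rightarrow> 'w set)" where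
  "envat (Or a b) (0 # p) r c s = envat a p (r @ [0]) c s"
| "envat (Or a b) (Suc 0 # p) r c s = envat b p (r @ [1]) c s"
| "envat (And a b) (0 # p) r c s = envat a p (r @ [0]) c s"
| "envat (And a b) (Suc 0 # p) r c s = envat b p (r @ [1]) c s"
| "envat (Dia a) (0 # p) r c s = envat a p (r @ [0]) c s"
| "envat (Box a) (0 # p) r c s = envat a p (r @ [0]) c s"
| "envat (Mu X a) (0 # p) r c s = envat a p (r @ [0]) c (s(X := iter_mu (FF s X a) (c r)))"
| "envat (Nu X a) (0 # p) r c s = envat a p (r @ [0]) c (s(X := iter_nu W (FF s X a) (c r)))"
| "envat _ _ r c s = s"

definition estep where
  "estep g i r c s = (case g of
     Mu X a \<Rightarrow> if i = 0 then s(X := iter_mu (FF s X a) (c r)) else s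
   | Nu X a \<Rightarrow> if i = 0 then s(X := iter_nu W (FF s X a) (c r)) else s
   | _ \<Rightarrow> s)"

lemma envat_single: "envat g [i] r c s = estep g i r c s"
proof -
  have "i = 0 \<or> i = Suc 0 \<or> (\<exists>n. i = Suc (Suc n))" by presburger
  then show ?thesis by (cases g) (auto simp: estep_def)
qed

lemma envat_snoc: "subf f p = Some g \<Longrightarrow> envat f (p @ [i]) r c s = estep g i (r @ p) c (envat f p r c s)"
proof (induction p arbitrary: f r s)
  case Nil then show ?case by (simp add: envat_single)
next
  case (Cons j p)
  have "j = 0 \<or> j = Suc 0 \<or> (\<exists>n. j = Suc (Suc n))" by presburger
  then show ?case using Cons by (cases f) (auto simp: fun_upd_def)
qed

lemma sp_shift:
  assumes "\<forall>q. strict_prefix q (j # p) \<longrightarrow> P (r @ q)"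
  shows "\<forall>q. strict_prefix q p \<longrightarrow> P ((r @ [j]) @ q)" "P r"
  using assms[rule_format, of "j # _"] assms[rule_format, of "[]"] by auto

lemma envat_cong: "(\<forall>q. strict_prefix q p \<longrightarrow> c (r @ q) = c' (r @ q)) \<Longrightarrow> envat f p r c s = envat f p r c' s"
proof (induction f p r c s rule: envat.induct)
  case (1 a b p r c s) then show ?case using sp_shift[of 0 p "\<lambda>q. c q = c' q" r] by simp
next
  case (2 a b p r c s) then show ?case using sp_shift[of "Suc 0" p "\<lambda>q. c q = c' q" r] by simp
next
  case (3 a b p r c s) then show ?case using sp_shift[of 0 p "\<lambda>q. c q = c' q" r] by simp
next
  case (4 a b p r c s) then show ?case using sp_shift[of "Suc 0" p "\<lambda>q. c q = c' q" r] by simp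
next
  case (5 a p r c s) then show ?case using sp_shift[of 0 p "\<lambda>q. c q = c' q" r] by simp
next
  case (6 a p r c s) then show ?case using sp_shift[of 0 p "\<lambda>q. c q = c' q" r] by simp
next
  case (7 X a p r c s) then show ?case using sp_shift[of 0 p "\<lambda>q. c q = c' q" r] by (simp add: fun_upd_def)
next
  case (8 X a p r c s) then show ?case using sp_shift[of 0 p "\<lambda>q. c q = c' q" r] by (simp add: fun_upd_def)
qed auto

lemma mono_FF: "A \<subseteq> B \<Longrightarrow> FF E X a A \<subseteq> FF E X a B"
  by (rule den_mono[OF VW]) auto

lemma FF_W: "FF E X a A \<subseteq> W"
  by (rule den_W[OF VW])

lemma binds_unique: "binds f0 X q \<Longrightarrow> binds f0 X q' \<Longrightarrow> q = q'"
  using nf unfolding normal_form_def by blast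

lemma rf_props:
  assumes "subf f0 p = Some (Var X)"
  shows "strict_prefix (rf f0 p X) p \<and> binds f0 X (rf f0 p X)"
proof -
  obtain q where q: "strict_prefix q p" "binds f0 X q" using sent assms unfolding sentence_def by blast
  have "rf f0 p X = q" unfolding rf_def
    by (rule the_equality) (use q binds_unique in auto)
  then show ?thesis using q by simp
qed

lemma env_noX:
  "subf f0 (u @ t) \<noteq> None \<Longrightarrow> (\<forall>t'. prefix t' t \<and> t' \<noteq> t \<longrightarrow> \<not> binds f0 X (u @ t'))
   \<Longrightarrow> envat f0 (u @ t) [] c s X = envat f0 u [] c s X"
proof (induction t rule: rev_induct)
  case Nil then show ?case by simp
next
  case (snoc i t)
  from snoc.prems(1) obtain g where g: "subf f0 (u @ t) = Some g"
    using subf_prefix[of f0 "u @ t" "[i]"] by auto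
  have nb: "\<not> binds f0 X (u @ t)" using snoc.prems(2) by auto
  have "\<forall>t'. prefix t' t \<and> t' \<noteq> t \<longrightarrow> \<not> binds f0 X (u @ t')"
  proof (intro allI impI)
    fix t' assume "prefix t' t \<and> t' \<noteq> t"
    then have "prefix t' (t @ [i]) \<and> t' \<noteq> t @ [i]"
      by (metis prefix_order.trans prefix_snoc prefix_length_le length_append_singleton not_less_eq_eq)
    then show "\<not> binds f0 X (u @ t')" using snoc.prems(2) by blast
  qed
  then have IH: "envat f0 (u @ t) [] c s X = envat f0 u [] c s X"
    using snoc.IH g by simp
  have "envat f0 (u @ t @ [i]) [] c s X = estep g i (u @ t) c (envat f0 (u @ t) [] c s) X"
    using envat_snoc[OF g, of i "[]"] by simp
  also have "\<dots> = envat f0 (u @ t) [] c s X"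
    using nb g unfolding estep_def binds_def by (auto split: fml.splits)
  finally show ?case using IH by simp
qed

end


context G begin

lemma var_env:
  assumes p: "subf f0 p = Some (Var X)" and g: "subf f0 (rf f0 p X) = Some g"
  shows "envat f0 p [] c s X = estep g (0::nat) (rf f0 p X) c (envat f0 (rf f0 p X) [] c s) X"
proof -
  define q where "q = rf f0 p X"
  have sp: "strict_prefix q p" and bq: "binds f0 X q" using rf_props[OF p] unfolding q_def by auto
  obtain zs where zs: "p = q @ zs" "zs \<noteq> []" using sp by (auto simp: strict_prefix_def prefix_def)
  then obtain j t where jt: "p = q @ j # t" by (cases zs) auto
  obtain a where ga: "g = Mu X a \<or> g = Nu X a" using bq g unfolding binds_def q_def by auto
  have "subf g (j # t) = Some (Var X)" using p g jt subf_append[of f0 q "j # t"] unfolding q_def[symmetric] by simp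
  then have "subf g (j # t) \<noteq> None" by simp
  then have j0: "j = 0" using ga by (cases j) auto
  have "subf f0 ((q @ [0]) @ t) \<noteq> None" using p jt j0 by simp
  moreover have "\<forall>t'. prefix t' t \<and> t' \<noteq> t \<longrightarrow> \<not> binds f0 X ((q @ [0]) @ t')"
    using binds_unique[OF bq] by fastforce
  ultimately have "envat f0 ((q @ [0]) @ t) [] c s X = envat f0 (q @ [0]) [] c s X"
    by (rule env_noX)
  then show ?thesis using jt j0 envat_snoc[OF g[folded q_def], of 0 "[]"] unfolding q_def[symmetric] by simp
qed

definition T :: "('w, 'o) gpos \<Rightarrow> bool" where
  "T x = (case x of (w, p, c) \<Rightarrow> (case subf f0 p of None \<Rightarrow> False
      | Some g \<Rightarrow> w \<in> den W R V \<Gamma> (envat f0 p [] c (\<lambda>_. {})) g))"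

lemma T_child:
  assumes "subf f0 p = Some g" "\<forall>X a. g \<noteq> Mu X a \<and> g \<noteq> Nu X a" "subf f0 (p @ [i]) = Some h"
  shows "T (v, p @ [i], c) = (v \<in> den W R V \<Gamma> (envat f0 p [] c (\<lambda>_. {})) h)"
proof -
  have "envat f0 (p @ [i]) [] c (\<lambda>_. {}) = envat f0 p [] c (\<lambda>_. {})"
    using envat_snoc[OF assms(1), of i "[]"] assms(2) by (cases g) (auto simp: estep_def)
  then show ?thesis using assms(3) unfolding T_def by simp
qed

lemma T_body_mu:
  assumes "subf f0 q = Some (Mu X a)" "\<forall>r. strict_prefix r q \<longrightarrow> c' r = c r"
  shows "T (v, q @ [0], c') = (v \<in> FF (envat f0 q [] c (\<lambda>_. {})) X a
            (iter_mu (FF (envat f0 q [] c (\<lambda>_. {})) X a) (c' q)))"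
proof -
  have e: "envat f0 q [] c' (\<lambda>_. {}) = envat f0 q [] c (\<lambda>_. {})"
    by (rule envat_cong) (use assms(2) in simp)
  have "subf f0 (q @ [0]) = Some a" using assms(1) by (simp add: subf_append)
  then show ?thesis using envat_snoc[OF assms(1), of 0 "[]" c'] e unfolding T_def by (simp add: estep_def)
qed

lemma T_body_nu:
  assumes "subf f0 q = Some (Nu X a)" "\<forall>r. strict_prefix r q \<longrightarrow> c' r = c r"
  shows "T (v, q @ [0], c') = (v \<in> FF (envat f0 q [] c (\<lambda>_. {})) X a
            (iter_nu W (FF (envat f0 q [] c (\<lambda>_. {})) X a) (c' q)))"
proof -
  have e: "envat f0 q [] c' (\<lambda>_. {}) = envat f0 q [] c (\<lambda>_. {})"
    by (rule envat_cong) (use assms(2) in simp)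
  have "subf f0 (q @ [0]) = Some a" using assms(1) by (simp add: subf_append)
  then show ?thesis using envat_snoc[OF assms(1), of 0 "[]" c'] e unfolding T_def by (simp add: estep_def)
qed

lemma mu_mem: "(w \<in> iter_mu (FF E X a) \<gamma>) = (\<exists>\<gamma>'<\<gamma>. w \<in> FF E X a (iter_mu (FF E X a) \<gamma>'))"
  by (subst mu_form[of "FF E X a", OF mono_FF]) auto

lemma nu_mem: "w \<in> W \<Longrightarrow> (w \<in> iter_nu W (FF E X a) \<gamma>) = (\<forall>\<gamma>'<\<gamma>. w \<in> FF E X a (iter_nu W (FF E X a) \<gamma>'))"
  by (subst nu_form[of "FF E X a" W, OF mono_FF FF_W]) auto

lemma reset_q: "reset f0 \<Gamma> q \<gamma>' c q = \<gamma>'" by (simp add: reset_def)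

lemma reset_sp: "strict_prefix r q \<Longrightarrow> reset f0 \<Gamma> q \<gamma>' c r = c r"
  unfolding reset_def using prefix_length_le[of "q @ [0]" r] prefix_length_le[of r q]
  by (auto dest: prefix_length_less)

lemma local_eq:
  assumes w: "w \<in> W"
  shows "case gnode W R V \<Gamma> f0 (w, p, c) of
      Win pl \<Rightarrow> (T (w, p, c) \<longleftrightarrow> pl = Eloise)
    | Turn Eloise S \<Rightarrow> (T (w, p, c) \<longleftrightarrow> (\<exists>y\<in>S. T y))
    | Turn Abelard S \<Rightarrow> (T (w, p, c) \<longleftrightarrow> (\<forall>y\<in>S. T y))"
proof (cases "subf f0 p")
  case None then show ?thesis by (simp add: gnode_def T_def)
next
  case (Some g)
  define E where "E = envat f0 p [] c (\<lambda>_. {})"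
  have Tx: "T (w, p, c) = (w \<in> den W R V \<Gamma> E g)" using Some by (simp add: T_def E_def)
  show ?thesis
  proof (cases g)
    case (Prop q) then show ?thesis using Some w Tx by (simp add: gnode_def)
  next
    case (NProp q) then show ?thesis using Some w Tx by (simp add: gnode_def)
  next
    case (Or a b)
    have c0: "T (v, p @ [0], c) = (v \<in> den W R V \<Gamma> E a)" for v
      unfolding E_def by (rule T_child[OF Some]) (use Or Some in \<open>auto simp: subf_append\<close>)
    have c1: "T (v, p @ [1], c) = (v \<in> den W R V \<Gamma> E b)" for v
      unfolding E_def by (rule T_child[OF Some]) (use Or Some in \<open>auto simp: subf_append\<close>)
    show ?thesis using Or Some Tx c0 c1 by (simp add: gnode_def)
  next
    case (And a b)
    have c0: "T (v, p @ [0], c) = (v \<in> den W R V \<Gamma> E a)" for v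
      unfolding E_def by (rule T_child[OF Some]) (use And Some in \<open>auto simp: subf_append\<close>)
    have c1: "T (v, p @ [1], c) = (v \<in> den W R V \<Gamma> E b)" for v
      unfolding E_def by (rule T_child[OF Some]) (use And Some in \<open>auto simp: subf_append\<close>)
    show ?thesis using And Some Tx c0 c1 by (simp add: gnode_def)
  next
    case (Dia a)
    have c0: "T (v, p @ [0], c) = (v \<in> den W R V \<Gamma> E a)" for v
      unfolding E_def by (rule T_child[OF Some]) (use Dia Some in \<open>auto simp: subf_append\<close>)
    show ?thesis using Dia Some Tx c0 w by (auto simp add: gnode_def)
  next
    case (Box a)
    have c0: "T (v, p @ [0], c) = (v \<in> den W R V \<Gamma> E a)" for v
      unfolding E_def by (rule T_child[OF Some]) (use Box Some in \<open>auto simp: subf_append\<close>)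
    show ?thesis using Box Some Tx c0 w by (auto simp add: gnode_def)
  next
    case (Mu X a)
    have cb: "T (w, p @ [0], c(p := \<gamma>)) = (w \<in> FF E X a (iter_mu (FF E X a) \<gamma>))" for \<gamma>
      using T_body_mu[OF Some[unfolded Mu], of "c(p := \<gamma>)" c w] unfolding E_def by auto
    have "T (w, p, c) = (\<exists>\<gamma><\<Gamma>. T (w, p @ [0], c(p := \<gamma>)))"
      using Tx Mu cb mu_mem by simp
    then show ?thesis using Mu Some by (auto simp add: gnode_def)
  next
    case (Nu X a)
    have cb: "T (w, p @ [0], c(p := \<gamma>)) = (w \<in> FF E X a (iter_nu W (FF E X a) \<gamma>))" for \<gamma>
      using T_body_nu[OF Some[unfolded Nu], of "c(p := \<gamma>)" c w] unfolding E_def by auto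
    have "T (w, p, c) = (\<forall>\<gamma><\<Gamma>. T (w, p @ [0], c(p := \<gamma>)))"
      using Tx Nu cb nu_mem[OF w] by simp
    then show ?thesis using Nu Some by (auto simp add: gnode_def)
  next
    case (Var X)
    define q where "q = rf f0 p X"
    have pv: "subf f0 p = Some (Var X)" using Some Var by simp
    have bq: "binds f0 X q" using rf_props[OF pv] unfolding q_def by auto
    then obtain b where qb: "subf f0 q = Some (Mu X b) \<or> subf f0 q = Some (Nu X b)"
      unfolding binds_def by auto
    define Eq where "Eq = envat f0 q [] c (\<lambda>_. {})"
    have rs: "\<forall>r. strict_prefix r q \<longrightarrow> reset f0 \<Gamma> q \<gamma>' c r = c r" for \<gamma>' using reset_sp by blast
    from qb show ?thesis
    proof
      assume qm: "subf f0 q = Some (Mu X b)"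
      have env: "E X = iter_mu (FF Eq X b) (c q)"
        using var_env[OF pv qm[unfolded q_def], of c "\<lambda>_. {}"] unfolding E_def Eq_def q_def[symmetric]
        by (simp add: estep_def)
      have cb: "T (w, q @ [0], reset f0 \<Gamma> q \<gamma>' c) = (w \<in> FF Eq X b (iter_mu (FF Eq X b) \<gamma>'))" for \<gamma>'
        using T_body_mu[OF qm rs, of w] unfolding Eq_def reset_q by simp
      have "T (w, p, c) = (\<exists>\<gamma>'<c q. T (w, q @ [0], reset f0 \<Gamma> q \<gamma>' c))"
        using Tx Var env cb mu_mem w by simp
      moreover have "gnode W R V \<Gamma> f0 (w, p, c) = (if \<not> (\<exists>\<delta>. \<delta> < c q) then Win Abelard
          else Turn Eloise {(w, q @ [0], reset f0 \<Gamma> q \<gamma>' c) | \<gamma>'. \<gamma>' < c q})"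
        using pv qm unfolding q_def by (simp add: gnode_def Let_def)
      ultimately show ?thesis by auto
    next
      assume qm: "subf f0 q = Some (Nu X b)"
      have env: "E X = iter_nu W (FF Eq X b) (c q)"
        using var_env[OF pv qm[unfolded q_def], of c "\<lambda>_. {}"] unfolding E_def Eq_def q_def[symmetric]
        by (simp add: estep_def)
      have cb: "T (w, q @ [0], reset f0 \<Gamma> q \<gamma>' c) = (w \<in> FF Eq X b (iter_nu W (FF Eq X b) \<gamma>'))" for \<gamma>'
        using T_body_nu[OF qm rs, of w] unfolding Eq_def reset_q by simp
      have "T (w, p, c) = (\<forall>\<gamma>'<c q. T (w, q @ [0], reset f0 \<Gamma> q \<gamma>' c))"
        using Tx Var env cb nu_mem[OF w] w by simp
      moreover have "gnode W R V \<Gamma> f0 (w, p, c) = (if \<not> (\<exists>\<delta>. \<delta> < c q) then Win Eloise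
          else Turn Abelard {(w, q @ [0], reset f0 \<Gamma> q \<gamma>' c) | \<gamma>'. \<gamma>' < c q})"
        using pv qm unfolding q_def by (simp add: gnode_def Let_def)
      ultimately show ?thesis by auto
    qed
  qed
qed

end


context G begin

lemma succ_cases:
  assumes "gnode W R V \<Gamma> f0 (w, p, c) = Turn pl S" "y \<in> S"
  shows "(\<exists>g v i. subf f0 p = Some g \<and> p \<notin> Sub_munu f0 \<and> subf f0 (p @ [i]) \<noteq> None
            \<and> v \<in> insert w (R `` {w}) \<and> y = (v, p @ [i], c))
       \<or> (\<exists>\<gamma>. p \<in> Sub_munu f0 \<and> subf f0 (p @ [0]) \<noteq> None \<and> \<gamma> < \<Gamma> \<and> y = (w, p @ [0], c(p := \<gamma>)))
       \<or> (\<exists>q \<gamma>'. strict_prefix q p \<and> subf f0 p \<noteq> None \<and> q \<in> Sub_munu f0 \<and> \<gamma>' < c q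
            \<and> y = (w, q @ [0], reset f0 \<Gamma> q \<gamma>' c))"
proof (cases "subf f0 p")
  case None then show ?thesis using assms by (simp add: gnode_def)
next
  case (Some g)
  have nb: "p \<notin> Sub_munu f0" if "\<forall>X a. g \<noteq> Mu X a \<and> g \<noteq> Nu X a"
    using that Some unfolding Sub_munu_def binds_def by auto
  have ch: "subf f0 (p @ [i]) = subf g [i]" for i using Some by (simp add: subf_append)
  show ?thesis
  proof (cases g)
    case (Var X)
    define q where "q = rf f0 p X"
    have pv: "subf f0 p = Some (Var X)" using Some Var by simp
    have sp: "strict_prefix q p" and bq: "binds f0 X q" using rf_props[OF pv] unfolding q_def by auto
    then obtain b where qb: "subf f0 q = Some (Mu X b) \<or> subf f0 q = Some (Nu X b)"
      unfolding binds_def by auto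
    have qs: "q \<in> Sub_munu f0" using bq unfolding Sub_munu_def by auto
    from qb have "\<exists>\<gamma>'. \<gamma>' < c q \<and> y = (w, q @ [0], reset f0 \<Gamma> q \<gamma>' c)"
    proof
      assume qm: "subf f0 q = Some (Mu X b)"
      then show ?thesis using assms pv unfolding q_def by (auto simp: gnode_def Let_def split: if_splits)
    next
      assume qm: "subf f0 q = Some (Nu X b)"
      then show ?thesis using assms pv unfolding q_def by (auto simp: gnode_def Let_def split: if_splits)
    qed
    then show ?thesis using sp qs Some by blast
  next
    case (Mu X a)
    have "p \<in> Sub_munu f0" using Some Mu unfolding Sub_munu_def binds_def by auto
    then show ?thesis using assms Some Mu ch by (auto simp: gnode_def)
  next
    case (Nu X a)
    have "p \<in> Sub_munu f0" using Some Nu unfolding Sub_munu_def binds_def by auto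
    then show ?thesis using assms Some Nu ch by (auto simp: gnode_def)
  next
    case (Or a b)
    then show ?thesis using assms Some nb ch by (auto simp: gnode_def)
  next
    case (And a b)
    then show ?thesis using assms Some nb ch by (auto simp: gnode_def)
  next
    case (Dia a)
    then show ?thesis using assms Some nb ch by (auto simp: gnode_def split: if_splits)
  next
    case (Box a)
    then show ?thesis using assms Some nb ch by (auto simp: gnode_def split: if_splits)
  qed (use assms Some in \<open>auto simp: gnode_def\<close>)
qed

definition ent :: "(nat list \<Rightarrow> 'o) \<Rightarrow> nat list \<Rightarrow> nat \<Rightarrow> 'o" where
  "ent c p k = (if k < length p \<and> take k p \<in> Sub_munu f0 then c (take k p) else \<Gamma>)"

definition meas :: "('w, 'o) gpos \<Rightarrow> 'o list \<times> nat" where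
  "meas x = (case x of (w, p, c) \<Rightarrow> (map (ent c p) [0..<size f0], size f0 - length p))"

definition Rel where "Rel = lex {(a, b). a < (b::'o)} <*lex*> less_than"

lemma wf_Rel: "wf Rel"
  unfolding Rel_def by (intro wf_lex_prod wf_lex wf wf_less_than)

lemma lex_map:
  assumes "i < D" "\<forall>k<i. f k = g k" "f i < (g i :: 'o)"
  shows "(map f [0..<D], map g [0..<D]) \<in> lex {(a, b). a < b}"
proof -
  have u: "[0..<D] = [0..<i] @ i # [Suc i..<D]"
    using upt_add_eq_append[of 0 i "D - i"] assms(1) upt_conv_Cons[of i D] by simp
  have "map f [0..<i] = map g [0..<i]" using assms(2) by auto
  then have ef: "map f [0..<D] = map f [0..<i] @ f i # map f [Suc i..<D]"
    and eg: "map g [0..<D] = map f [0..<i] @ g i # map g [Suc i..<D]" unfolding u by auto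
  show ?thesis unfolding lex_conv
    apply (simp only: mem_Collect_eq case_prod_conv length_map)
    apply (rule conjI, rule refl)
    using ef eg assms(3) by blast
qed

lemma move_dec:
  assumes "cmove (gnode W R V \<Gamma> f0 x) \<sigma> x y"
  shows "(meas y, meas x) \<in> Rel"
proof -
  obtain w p c where x: "x = (w, p, c)" by (cases x) auto
  obtain pl S where t: "gnode W R V \<Gamma> f0 x = Turn pl S" "y \<in> S"
    using assms unfolding cmove_def by (auto split: gnode.splits player.splits)
  let ?D = "size f0"
  from succ_cases[OF t[unfolded x]] show ?thesis
  proof (elim disjE exE conjE)
    fix g v i assume a: "subf f0 p = Some g" "p \<notin> Sub_munu f0" "subf f0 (p @ [i]) \<noteq> None"
      "v \<in> insert w (R `` {w})" "y = (v, p @ [i], c)"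
    have l: "length p < ?D" using subf_len[OF a(3)] by simp
    have "ent c (p @ [i]) k = ent c p k" for k
      using a(2) unfolding ent_def by (cases "k < length p") (auto simp: less_Suc_eq)
    then show ?thesis using l a(5) x unfolding meas_def Rel_def by auto
  next
    fix \<gamma> assume a: "p \<in> Sub_munu f0" "subf f0 (p @ [0]) \<noteq> None" "\<gamma> < \<Gamma>" "y = (w, p @ [0], c(p := \<gamma>))"
    have l: "length p < ?D" using subf_len[OF a(2)] by simp
    have "(map (ent (c(p := \<gamma>)) (p @ [0])) [0..<?D], map (ent c p) [0..<?D]) \<in> lex {(a, b). a < b}"
      by (rule lex_map[OF l]) (use a in \<open>auto simp: ent_def\<close>)
    then show ?thesis using a(4) x unfolding meas_def Rel_def by auto
  next
    fix q \<gamma>' assume a: "strict_prefix q p" "subf f0 p \<noteq> None" "q \<in> Sub_munu f0" "\<gamma>' < c q"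
      "y = (w, q @ [0], reset f0 \<Gamma> q \<gamma>' c)"
    have lq: "length q < length p" using prefix_length_less[OF a(1)] .
    have l: "length q < ?D" using subf_len[OF a(2)] lq by simp
    have tq: "take (length q) p = q" using a(1) by (metis prefix_def strict_prefix_def append_eq_conv_conj)
    have tk: "take k p = take k q" if "k < length q" for k
      using tq that by (metis min.strict_order_iff take_take)
    have spk: "strict_prefix (take k q) q" if "k < length q" for k
      using that by (metis append_take_drop_id prefix_def strict_prefix_def length_take min.absorb4 nat_neq_iff)
    have "(map (ent (reset f0 \<Gamma> q \<gamma>' c) (q @ [0])) [0..<?D], map (ent c p) [0..<?D]) \<in> lex {(a, b). a < b}"
    proof (rule lex_map[OF l])
      show "\<forall>k<length q. ent (reset f0 \<Gamma> q \<gamma>' c) (q @ [0]) k = ent c p k"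
        using tk spk lq reset_sp unfolding ent_def by auto
      show "ent (reset f0 \<Gamma> q \<gamma>' c) (q @ [0]) (length q) < ent c p (length q)"
        using a(3,4) tq lq unfolding ent_def by (simp add: reset_q)
    qed
    then show ?thesis using a(5) x unfolding meas_def Rel_def by auto
  qed
qed

lemma no_infinite_play: "\<not> (\<exists>f. \<forall>n. cmove (gnode W R V \<Gamma> f0 (f n)) \<sigma> (f n) (f (Suc n)))"
proof
  assume "\<exists>f. \<forall>n. cmove (gnode W R V \<Gamma> f0 (f n)) \<sigma> (f n) (f (Suc n))"
  then obtain f where f: "\<forall>n. cmove (gnode W R V \<Gamma> f0 (f n)) \<sigma> (f n) (f (Suc n))" by blast
  have "\<forall>n. ((meas \<circ> f) (Suc n), (meas \<circ> f) n) \<in> Rel"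
  proof
    fix n show "((meas \<circ> f) (Suc n), (meas \<circ> f) n) \<in> Rel" using move_dec[OF f[rule_format, of n]] by simp
  qed
  then show False using wf_Rel unfolding wf_iff_no_infinite_down_chain by blast
qed

end


context G begin

lemma step_W:
  assumes "cmove (gnode W R V \<Gamma> f0 x) \<sigma> x y" "fst x \<in> W"
  shows "fst y \<in> W"
proof -
  obtain w p c where x: "x = (w, p, c)" by (cases x) auto
  obtain pl S where t: "gnode W R V \<Gamma> f0 x = Turn pl S" "y \<in> S"
    using assms unfolding cmove_def by (auto split: gnode.splits player.splits)
  show ?thesis using succ_cases[OF t[unfolded x]] assms(2) RW x by auto
qed

lemma reach_W:
  assumes "(\<lambda>x y. cmove (gnode W R V \<Gamma> f0 x) \<sigma> x y)\<^sup>*\<^sup>* x0 x" "fst x0 \<in> W"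
  shows "fst x \<in> W"
  using assms by (induction rule: rtranclp_induct) (auto intro: step_W)

lemma envat_Nil: "envat f [] r c s = s" by (cases f) auto

lemma T_init: "T (init_pos \<Gamma> w0) = sat W R V \<Gamma> w0 f0"
  unfolding T_def init_pos_def sat_def by (simp add: envat_Nil)

lemma local_eq': 
  assumes "fst x \<in> W"
  shows "case gnode W R V \<Gamma> f0 x of
      Win pl \<Rightarrow> (T x \<longleftrightarrow> pl = Eloise)
    | Turn Eloise S \<Rightarrow> (T x \<longleftrightarrow> (\<exists>y\<in>S. T y))
    | Turn Abelard S \<Rightarrow> (T x \<longleftrightarrow> (\<forall>y\<in>S. T y))"
proof -
  obtain w p c where x: "x = (w, p, c)" by (cases x) auto
  show ?thesis using local_eq[of w p c] assms unfolding x by simp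
qed

lemma main:
  assumes w0: "w0 \<in> W"
  shows "sat W R V \<Gamma> w0 f0 \<longleftrightarrow> eloise_wins W R V \<Gamma> w0 f0"
proof
  assume "sat W R V \<Gamma> w0 f0"
  then have Ti: "T (init_pos \<Gamma> w0)" using T_init by simp
  define \<sigma> where "\<sigma> x = (case gnode W R V \<Gamma> f0 x of Turn Eloise S \<Rightarrow> Some (SOME y. y \<in> S \<and> T y) | _ \<Rightarrow> None)" for x
  let ?step = "\<lambda>x y. cmove (gnode W R V \<Gamma> f0 x) \<sigma> x y"
  have inv: "T x \<and> fst x \<in> W" if "?step\<^sup>*\<^sup>* (init_pos \<Gamma> w0) x" for x
    using that
  proof (induction rule: rtranclp_induct)
    case base then show ?case using Ti w0 by (simp add: init_pos_def)
  next
    case (step x y)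
    have yW: "fst y \<in> W" using step_W step by blast
    have le: "case gnode W R V \<Gamma> f0 x of
      Win pl \<Rightarrow> (T x \<longleftrightarrow> pl = Eloise)
    | Turn Eloise S \<Rightarrow> (T x \<longleftrightarrow> (\<exists>y\<in>S. T y))
    | Turn Abelard S \<Rightarrow> (T x \<longleftrightarrow> (\<forall>y\<in>S. T y))" using local_eq' step by blast
    have "T y"
    proof (cases "gnode W R V \<Gamma> f0 x")
      case (Win pl) then show ?thesis using step(2) by (simp add: cmove_def)
    next
      case (Turn pl S)
      show ?thesis
      proof (cases pl)
        case Eloise
        have ex: "\<exists>y\<in>S. T y" using le step Turn Eloise by simp
        have "y = (SOME y. y \<in> S \<and> T y)" using step(2) Turn Eloise unfolding cmove_def \<sigma>_def by simp
        then show ?thesis using someI_ex[of "\<lambda>y. y \<in> S \<and> T y"] ex by auto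
      next
        case Abelard
        then show ?thesis using le step Turn unfolding cmove_def by simp
      qed
    qed
    then show ?case using yW by simp
  qed
  have "winning_strategy W R V \<Gamma> w0 f0 \<sigma>"
    unfolding winning_strategy_def Let_def
  proof (intro conjI allI impI)
    fix x assume r: "?step\<^sup>*\<^sup>* (init_pos \<Gamma> w0) x"
    have Tx: "T x" and xW: "fst x \<in> W" using inv[OF r] by auto
    have le: "case gnode W R V \<Gamma> f0 x of
      Win pl \<Rightarrow> (T x \<longleftrightarrow> pl = Eloise)
    | Turn Eloise S \<Rightarrow> (T x \<longleftrightarrow> (\<exists>y\<in>S. T y))
    | Turn Abelard S \<Rightarrow> (T x \<longleftrightarrow> (\<forall>y\<in>S. T y))" using local_eq' xW by blast
    show "case gnode W R V \<Gamma> f0 x of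
             Turn Eloise S \<Rightarrow> (\<exists>y. \<sigma> x = Some y \<and> y \<in> S)
           | Turn Abelard S \<Rightarrow> True
           | Win pl \<Rightarrow> pl = Eloise"
    proof (cases "gnode W R V \<Gamma> f0 x")
      case (Win pl) then show ?thesis using le Tx by simp
    next
      case (Turn pl S)
      show ?thesis
      proof (cases pl)
        case Eloise
        have ex: "\<exists>y\<in>S. T y" using le Tx Turn Eloise by simp
        then show ?thesis using Turn Eloise someI_ex[of "\<lambda>y. y \<in> S \<and> T y"] unfolding \<sigma>_def by auto
      next
        case Abelard then show ?thesis using Turn by simp
      qed
    qed
  next
    show "\<not> (\<exists>f. f 0 = init_pos \<Gamma> w0 \<and> (\<forall>n. ?step (f n) (f (Suc n))))"
      using no_infinite_play[of \<sigma>] by blast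
  qed
  then show "eloise_wins W R V \<Gamma> w0 f0" unfolding eloise_wins_def by blast
next
  assume "eloise_wins W R V \<Gamma> w0 f0"
  then obtain \<sigma> where ws: "winning_strategy W R V \<Gamma> w0 f0 \<sigma>" unfolding eloise_wins_def by blast
  let ?step = "\<lambda>x y. cmove (gnode W R V \<Gamma> f0 x) \<sigma> x y"
  have loc: "\<forall>x. ?step\<^sup>*\<^sup>* (init_pos \<Gamma> w0) x \<longrightarrow>
          (case gnode W R V \<Gamma> f0 x of
             Turn Eloise S \<Rightarrow> (\<exists>y. \<sigma> x = Some y \<and> y \<in> S)
           | Turn Abelard S \<Rightarrow> True
           | Win pl \<Rightarrow> pl = Eloise)"
    and fin: "\<not> (\<exists>f. f 0 = init_pos \<Gamma> w0 \<and> (\<forall>n. ?step (f n) (f (Suc n))))"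
    using ws unfolding winning_strategy_def Let_def by auto
  show "sat W R V \<Gamma> w0 f0"
  proof (rule ccontr)
    assume ns: "\<not> sat W R V \<Gamma> w0 f0"
    define P where "P x \<longleftrightarrow> ?step\<^sup>*\<^sup>* (init_pos \<Gamma> w0) x \<and> \<not> T x" for x
    have next_: "\<exists>y. ?step x y \<and> P y" if Px: "P x" for x
    proof -
      have r: "?step\<^sup>*\<^sup>* (init_pos \<Gamma> w0) x" and nT: "\<not> T x" using Px unfolding P_def by auto
      have xW: "fst x \<in> W" using reach_W[OF r] w0 by (simp add: init_pos_def)
      have le: "case gnode W R V \<Gamma> f0 x of
        Win pl \<Rightarrow> (T x \<longleftrightarrow> pl = Eloise)
      | Turn Eloise S \<Rightarrow> (T x \<longleftrightarrow> (\<exists>y\<in>S. T y))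
      | Turn Abelard S \<Rightarrow> (T x \<longleftrightarrow> (\<forall>y\<in>S. T y))" using local_eq' xW by blast
      have lx: "case gnode W R V \<Gamma> f0 x of
             Turn Eloise S \<Rightarrow> (\<exists>y. \<sigma> x = Some y \<and> y \<in> S)
           | Turn Abelard S \<Rightarrow> True
           | Win pl \<Rightarrow> pl = Eloise" using loc r by blast
      have "\<exists>y. ?step x y \<and> \<not> T y"
      proof (cases "gnode W R V \<Gamma> f0 x")
        case (Win pl) then show ?thesis using le lx nT by simp
      next
        case (Turn pl S)
        show ?thesis
        proof (cases pl)
          case Eloise
          then obtain y where "\<sigma> x = Some y" "y \<in> S" using lx Turn by auto
          moreover have "\<forall>y\<in>S. \<not> T y" using le nT Turn Eloise by simp
          ultimately show ?thesis using Turn Eloise unfolding cmove_def by auto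
        next
          case Abelard
          then obtain y where y: "y \<in> S" "\<not> T y" using le nT Turn by auto
          then have "?step x y" using Turn Abelard by (simp add: cmove_def)
          with y show ?thesis by blast
        qed
      qed
      then obtain y where "?step x y" "\<not> T y" by blast
      moreover have "?step\<^sup>*\<^sup>* (init_pos \<Gamma> w0) y" using r calculation(1) by (rule rtranclp.rtrancl_into_rtrancl)
      ultimately show ?thesis unfolding P_def by blast
    qed
    have P0: "P (init_pos \<Gamma> w0)" unfolding P_def using ns T_init by simp
    obtain f where f: "\<forall>n. (P (f n) \<and> (n = 0 \<longrightarrow> f n = init_pos \<Gamma> w0)) \<and> ?step (f n) (f (Suc n))"
      using dependent_nat_choice[where P="\<lambda>n x. P x \<and> (n = 0 \<longrightarrow> x = init_pos \<Gamma> w0)"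
          and Q="\<lambda>n x y. ?step x y"] P0 next_ by blast
    then show False using fin by blast
  qed
qed

end

theorem mainTheorem3:
  fixes W :: "'w set" and R :: "('w \<times> 'w) set" and V :: "'p \<Rightarrow> 'w set"
    and \<Gamma> :: "'o::wellorder" and w0 :: 'w and \<phi>0 :: "('p, 'l) fml"
  assumes "\<exists>\<delta>. \<delta> < \<Gamma>"
    and "R \<subseteq> W \<times> W" and "\<forall>p. V p \<subseteq> W"
    and "w0 \<in> W"
    and "sentence \<phi>0" and "normal_form \<phi>0"
  shows "sat W R V \<Gamma> w0 \<phi>0 \<longleftrightarrow> eloise_wins W R V \<Gamma> w0 \<phi>0"
proof -
  interpret G W R V \<Gamma> \<phi>0 using assms(2,3,5,6) by unfold_locales
  show ?thesis using main[OF assms(4)] .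
qed

end
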